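(* Let $g(x)=a(x)/f(x)$ be a rate-1 convolutional code over $GF(q)$, let $z(x)$ be the minimum complementary polynomial of $a(x)$, of degree $l$, let $N=n+l$, and let $h_1,\dots,h_{N-1}$ be defined by $f(x)z(x)=1+h_1x+\cdots+h_{N-1}x^{N-1}+x^N$. The dual encoder $\bar C$ realizes $q(x)=1/g(x)=\frac{f(x)z(x)}{a(x)z(x)}=1+\frac{h_1x+\cdots+h_{N-1}x^{N-1}}{1+x^N}$. (i) If $b_1,b_2,\dots\in GF(q)$ is an information sequence and $c_1,c_2,\dots$ is the codeword of $g$ generated from it, i.e. $c(x)f(x)=b(x)a(x)$ as formal power series, then $\bar C$ with input $c_1,c_2,\dots$ outputs exactly $b_1,b_2,\dots$. (ii) Let $c_1,c_2,\dots$ be mutually independent $GF(q)$-valued random variables with $\Pr(c_k=\omega)=P_{c_k}(\omega)$. Let $S'_j(k)$ and $b_k$ be the random register contents and outputs obtained by running $\bar C$ on this input. Then for every $k\ge1$ the following hold. - The random variables $c_k,S'_1(k-1),\dots,S'_N(k-1)$ are mutually independent. - For every $j$ and every $\omega$, $\Pr(S'_j(k)=\omega)=\overrightarrow P_j(k)(\omega)$. - For every $\omega\in GF(q)$, $$Q_k(\omega)=\sum_{\substack{u'\in GF(q)^N,\ c\in GF(q)\\ c+\sum_{j=1}^{N-1}h_ju'_j=\omega}}\ \prod_{j=1}^{N}\overrightarrow P_j(k-1)(u'_j)\,P_{c_k}(c)=\Pr(b_k=\omega).$$ Hence the dual encoder, run on pmf vectors with convolutions in place of additions, outputs the (forward)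 pmf of the information symbols.
   Context: Standing conventions. Let $q=2^m$, so $GF(q)$ has characteristic 2 and $-x=x$. A rate-1 convolutional code over $GF(q)$ is given by $g(x)=a(x)/f(x)$ with $a(x)=1+a_1x+\cdots+a_{n-1}x^{n-1}+x^n$ and $f(x)=1+f_1x+\cdots+f_{n-1}x^{n-1}+x^n$, where $a_i,f_i\in GF(q)$ and $n\ge1$. The minimum complementary polynomial of $a(x)$ is the polynomial $z(x)=1+z_1x+\cdots+z_{l-1}x^{l-1}+x^l$ of smallest degree $l\ge0$ such that $a(x)z(x)=1+x^{n+l}$. Put $N=n+l$ and define $h_1,\dots,h_{N-1}\in GF(q)$ by $f(x)z(x)=1+h_1x+\cdots+h_{N-1}x^{N-1}+x^N$. Dual encoder $\bar C$ (realizing $1/g$). It has registers $S'_1(k),\dots,S'_N(k)\in GF(q)$, with $S'_j(0)=0$ for all $j$. On input $c_1,c_2,\dots$ it updates $S'_1(k)=c_k+S'_N(k-1)$ and $S'_j(k)=S'_{j-1}(k-1)$ for $2\le j\le N$, and it outputs $b_k=c_k+\sum_{j=1}^{N-1}h_jS'_j(k-1)$. Pmf vectors are real vectors indexed by $GF(q)$. The following operations are used. - Convolution: $(P*Q)(\omega)=\sum_{c\in GF(q)}P(c)Q(\omega-c)$. - For $h\in GF(q)$, the permutation $\Pi_hP$ is given by $(\Pi_hP)(\omega)=\sum_{u:\,hu=\omega}P(u)$; for $h\neq0$ this is $(\Pi_hP)(hu)=P(u)$. - $\delta_0$ denotes the point mass at $0$. Forward dual encoder on pmfs. Given pmf vectors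 $P_{c_1},P_{c_2},\dots$, set $\overrightarrow P_j(0)=\delta_0$ for all $j$. For $k\ge1$ set $\overrightarrow P_1(k)=P_{c_k}*\overrightarrow P_N(k-1)$ and $\overrightarrow P_j(k)=\overrightarrow P_{j-1}(k-1)$ for $2\le j\le N$. The output is $Q_k=P_{c_k}*\Pi_{h_1}\overrightarrow P_1(k-1)*\cdots*\Pi_{h_{N-1}}\overrightarrow P_{N-1}(k-1)$. *)

theory Defs
  imports "HOL-Probability.Probability" "HOL-Computational_Algebra.Polynomial_FPS"
begin

text \<open>Minimum complementary polynomial z of a: smallest degree l with a z = 1 + x^(n+l),
  where n = degree a.  (Any such z automatically has the shape 1 + ... + x^l.)\<close>
definition is_min_comp_poly :: "'a::field poly \<Rightarrow> 'a poly \<Rightarrow> bool" where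
  "is_min_comp_poly a z \<longleftrightarrow>
     a * z = 1 + monom 1 (degree a + degree z) \<and>
     (\<forall>z'. a * z' = 1 + monom 1 (degree a + degree z') \<longrightarrow> degree z \<le> degree z')"

text \<open>Dual encoder registers S'_j(k) (j = 1..N) on input c_1, c_2, ... (c 0 unused).\<close>
fun dual_reg :: "nat \<Rightarrow> (nat \<Rightarrow> 'a::comm_ring_1) \<Rightarrow> nat \<Rightarrow> nat \<Rightarrow> 'a" where
  "dual_reg N c 0 j = 0"
| "dual_reg N c (Suc k) j =
     (if j = 1 then c (Suc k) + dual_reg N c k N else dual_reg N c k (j - 1))"

definition dual_out :: "(nat \<Rightarrow> 'a::comm_ring_1) \<Rightarrow> nat \<Rightarrow> (nat \<Rightarrow> 'a) \<Rightarrow> nat \<Rightarrow> 'a" where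
  "dual_out h N c k = c k + (\<Sum>j = 1..N - 1. h j * dual_reg N c (k - 1) j)"

definition pmf_conv :: "('a::{finite,comm_ring_1} \<Rightarrow> real) \<Rightarrow> ('a \<Rightarrow> real) \<Rightarrow> 'a \<Rightarrow> real" where
  "pmf_conv P Q \<omega> = (\<Sum>c\<in>UNIV. P c * Q (\<omega> - c))"

definition pmf_perm :: "'a::{finite,comm_ring_1} \<Rightarrow> ('a \<Rightarrow> real) \<Rightarrow> 'a \<Rightarrow> real" where
  "pmf_perm h P \<omega> = (\<Sum>u | h * u = \<omega>. P u)"

definition delta0 :: "'a::zero \<Rightarrow> real" where
  "delta0 \<omega> = (if \<omega> = 0 then 1 else 0)"

fun fwd_pmf :: "nat \<Rightarrow> (nat \<Rightarrow> 'a::{finite,comm_ring_1} \<Rightarrow> real) \<Rightarrow> nat \<Rightarrow> nat \<Rightarrow> 'a \<Rightarrow> real" where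
  "fwd_pmf N Pc 0 j = delta0"
| "fwd_pmf N Pc (Suc k) j =
     (if j = 1 then pmf_conv (Pc (Suc k)) (fwd_pmf N Pc k N) else fwd_pmf N Pc k (j - 1))"

definition fwd_out :: "(nat \<Rightarrow> 'a::{finite,comm_ring_1}) \<Rightarrow> nat \<Rightarrow> (nat \<Rightarrow> 'a \<Rightarrow> real) \<Rightarrow> nat \<Rightarrow> 'a \<Rightarrow> real" where
  "fwd_out h N Pc k =
     foldl pmf_conv (Pc k) (map (\<lambda>j. pmf_perm (h j) (fwd_pmf N Pc (k - 1) j)) [1..<N])"

end

theory Submission
  imports Defs
begin


lemma fps_add_self2:
  fixes y :: "'a::field fps"
  assumes two: "(2::'a) = 0"
  shows "y + y = 0"
proof (rule fps_ext)
  fix i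
  have "fps_nth (y + y) i = (1 + 1) * fps_nth y i" by (simp only: fps_add_nth distrib_right mult_1_left)
  also have "\<dots> = 0" by (simp only: one_add_one two mult_zero_left)
  finally show "fps_nth (y + y) i = fps_nth 0 i" by (simp only: fps_zero_nth)
qed

lemma dual_part_i:
  fixes c b h :: "nat \<Rightarrow> 'a::field" and A Z F :: "'a fps"
  assumes two: "(2::'a) = 0" and N1: "N \<ge> 1"
    and AZ: "A * Z = 1 + fps_X ^ N"
    and FZ: "F * Z = 1 + fps_X ^ N + (\<Sum>j=1..N-1. fps_const (h j) * fps_X ^ j)"
    and nz: "A * Z \<noteq> 0"
    and eq: "F * Abs_fps (\<lambda>i. c (Suc i)) = A * Abs_fps (\<lambda>i. b (Suc i))"
    and k: "k \<ge> 1"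
  shows "dual_out h N c k = b k"
proof -
  define C where "C = Abs_fps (\<lambda>i. c (Suc i))"
  define B where "B = Abs_fps (\<lambda>i. b (Suc i))"
  define R where "R j = Abs_fps (\<lambda>i. dual_reg N c i j)" for j
  define D where "D = Abs_fps (\<lambda>i. dual_out h N c (Suc i))"
  have R1: "R 1 = fps_X * (C + R N)"
  proof (rule fps_ext)
    fix i show "fps_nth (R 1) i = fps_nth (fps_X * (C + R N)) i"
      by (cases i) (auto simp: R_def C_def)
  qed
  have Rj: "R j = fps_X * R (j - 1)" if "j \<ge> 2" for j
  proof (rule fps_ext)
    fix i show "fps_nth (R j) i = fps_nth (fps_X * R (j - 1)) i"
      using that by (cases i) (auto simp: R_def)
  qed
  have Rp: "R j = fps_X ^ (j - 1) * R 1" if "1 \<le> j" for j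
    using that
  proof (induction j)
    case 0 then show ?case by simp
  next
    case (Suc j)
    show ?case
    proof (cases "j = 0")
      case True then show ?thesis by simp
    next
      case False
      then have "R (Suc j) = fps_X * R j" using Rj[of "Suc j"] by simp
      also have "\<dots> = fps_X * (fps_X ^ (j - 1) * R 1)" using Suc False by simp
      also have "\<dots> = fps_X ^ (Suc j - 1) * R 1" using False
        by (cases j) (auto simp: mult.assoc)
      finally show ?thesis .
    qed
  qed
  have RN: "R N = fps_X ^ (N - 1) * R 1" using Rp[OF N1] .
  have XN: "fps_X * fps_X ^ (N - 1) = (fps_X ^ N :: 'a fps)"
    using N1 by (cases N) auto
  have key: "(1 + fps_X ^ N) * R 1 = fps_X * C"
  proof -
    have "R 1 = fps_X * (C + R N)" by (rule R1)
    also have "\<dots> = fps_X * (C + fps_X ^ (N - 1) * R 1)" by (simp only: RN)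
    also have "\<dots> = fps_X * C + (fps_X * fps_X ^ (N - 1)) * R 1"
      by (simp only: distrib_left mult.assoc)
    also have "\<dots> = fps_X * C + fps_X ^ N * R 1" by (simp only: XN)
    finally have eqR: "R 1 = fps_X * C + fps_X ^ N * R 1" .
    have "(1 + fps_X ^ N) * R 1 = R 1 + fps_X ^ N * R 1" by (simp only: distrib_right mult_1_left)
    also have "\<dots> = (fps_X * C + fps_X ^ N * R 1) + fps_X ^ N * R 1" by (subst (1) eqR) (rule refl)
    also have "\<dots> = fps_X * C + (fps_X ^ N * R 1 + fps_X ^ N * R 1)" by (rule add.assoc)
    also have "\<dots> = fps_X * C" by (simp only: fps_add_self2[OF two] add_0_right)
    finally show ?thesis .
  qed
  have D: "D = C + (\<Sum>j=1..N-1. fps_const (h j) * R j)"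
    by (rule fps_ext) (simp add: D_def C_def R_def dual_out_def fps_sum_nth)
  have "(1 + fps_X ^ N) * D = (1 + fps_X ^ N) * C + (\<Sum>j=1..N-1. fps_const (h j) * fps_X ^ (j - 1) * ((1 + fps_X ^ N) * R 1))"
  proof -
    have sE: "(\<Sum>j=1..N-1. fps_const (h j) * R j) = (\<Sum>j=1..N-1. fps_const (h j) * fps_X ^ (j - 1) * R 1)"
    proof (intro sum.cong refl)
      fix j assume "j \<in> {1..N-1}"
      then have "R j = fps_X ^ (j - 1) * R 1" by (intro Rp) auto
      then show "fps_const (h j) * R j = fps_const (h j) * fps_X ^ (j - 1) * R 1"
        by (simp only: mult.assoc)
    qed
    show ?thesis unfolding D sE distrib_left sum_distrib_left
      by (intro arg_cong2[where f="(+)"] refl sum.cong) (simp only: ac_simps)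
  qed
  also have "\<dots> = (1 + fps_X ^ N) * C + (\<Sum>j=1..N-1. fps_const (h j) * fps_X ^ j) * C"
    unfolding key sum_distrib_right
  proof (intro arg_cong2[where f="(+)"] refl sum.cong)
    fix j assume "j \<in> {1..N-1}"
    then obtain i where j: "j = Suc i" by (cases j) auto
    have XX: "fps_X ^ (j - 1) * fps_X = (fps_X ^ j :: 'a fps)"
      unfolding j by (metis diff_Suc_1 power_Suc2)
    show "fps_const (h j) * fps_X ^ (j - 1) * (fps_X * C) = fps_const (h j) * fps_X ^ j * C"
      by (simp only: mult.assoc XX[symmetric])
  qed
  also have "\<dots> = (F * Z) * C" by (simp only: FZ distrib_right)
  also have "\<dots> = Z * (F * C)" by (simp only: ac_simps)
  also have "\<dots> = (A * Z) * B" unfolding C_def B_def eq by (simp only: ac_simps)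
  finally have "(A * Z) * D = (A * Z) * B" unfolding AZ .
  then have "D = B" using nz mult_left_cancel by blast
  obtain k' where kk: "k = Suc k'" using k by (cases k) auto
  from \<open>D = B\<close> have "fps_nth D k' = fps_nth B k'" by (rule arg_cong)
  then have "dual_out h N c (Suc k') = b (Suc k')"
    unfolding D_def B_def fps_nth_Abs_fps .
  then show ?thesis unfolding kk .
qed


lemma poly_facts:
  fixes a f z :: "'a::field poly" and n :: nat
  assumes n_pos: "n \<ge> 1"
    and a_deg: "degree a = n" and a_lead: "lead_coeff a = 1" and a_0: "coeff a 0 = 1"
    and f_deg: "degree f = n" and f_lead: "lead_coeff f = 1" and f_0: "coeff f 0 = 1"
    and z_min: "is_min_comp_poly a z"
  defines "N \<equiv> n + degree z"
  shows "fps_of_poly a * fps_of_poly z = 1 + fps_X ^ N"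
    and "fps_of_poly f * fps_of_poly z = 1 + fps_X ^ N + (\<Sum>j=1..N-1. fps_const (coeff (f*z) j) * fps_X ^ j)"
    and "fps_of_poly a * fps_of_poly z \<noteq> 0" and "N \<ge> 1"
proof -
  have az: "a * z = 1 + monom 1 N" using z_min a_deg unfolding is_min_comp_poly_def N_def by simp
  show N1: "N \<ge> 1" using n_pos N_def by simp
  show AZ: "fps_of_poly a * fps_of_poly z = 1 + fps_X ^ N"
    using az by (simp add: fps_of_poly_mult[symmetric] fps_of_poly_add fps_of_poly_monom')
  show "fps_of_poly a * fps_of_poly z \<noteq> 0"
  proof
    assume "fps_of_poly a * fps_of_poly z = 0"
    then have e: "(1 + fps_X ^ N :: 'a fps) = 0" using AZ by metis
    have "fps_nth (1 + fps_X ^ N :: 'a fps) 0 = 1" unfolding fps_add_nth using N1 by simp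
    then show False unfolding e by simp
  qed
  have z0: "coeff z 0 = 1"
  proof -
    have "coeff (a * z) 0 = 1" using az N1 by (simp add: coeff_monom)
    then show ?thesis using a_0 by (simp add: coeff_mult_0)
  qed
  have znz: "z \<noteq> 0" using z0 by auto
  have degP: "degree (1 + monom (1::'a) N) = N"
    using N1 by (subst add.commute, subst degree_add_eq_left) (auto simp: degree_monom_eq)
  have "lead_coeff (a * z) = 1"
    unfolding az using degP N1 by (simp add: coeff_monom)
  then have zl: "lead_coeff z = 1" using a_lead by (simp add: lead_coeff_mult)
  have fnz: "f \<noteq> 0" using f_lead by auto
  have dfz: "degree (f * z) = N" using fnz znz f_deg N_def by (simp add: degree_mult_eq)
  have fz0: "coeff (f * z) 0 = 1" using f_0 z0 by (simp add: coeff_mult_0)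
  have fzN: "coeff (f * z) N = 1" using dfz f_lead zl by (metis lead_coeff_mult mult_1)
  show "fps_of_poly f * fps_of_poly z = 1 + fps_X ^ N + (\<Sum>j=1..N-1. fps_const (coeff (f*z) j) * fps_X ^ j)"
  proof (rule fps_ext)
    fix i
    have s: "(\<Sum>j=1..N-1. fps_nth (fps_const (coeff (f*z) j) * fps_X ^ j) i)
       = (if i \<in> {1..N-1} then coeff (f*z) i else 0)"
    proof -
      have "(\<Sum>j=1..N-1. fps_nth (fps_const (coeff (f*z) j) * fps_X ^ j) i)
         = (\<Sum>j\<in>{1..N-1}. if j = i then coeff (f*z) j else 0)"
        by (rule sum.cong) auto
      also have "\<dots> = (if i \<in> {1..N-1} then coeff (f*z) i else 0)"
        by (simp only: sum.delta[OF finite_atLeastAtMost])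
      finally show ?thesis .
    qed
    show "fps_nth (fps_of_poly f * fps_of_poly z) i =
      fps_nth (1 + fps_X ^ N + (\<Sum>j=1..N-1. fps_const (coeff (f*z) j) * fps_X ^ j)) i"
      unfolding fps_of_poly_mult[symmetric] fps_of_poly_nth fps_add_nth fps_sum_nth s
      using fz0 fzN dfz N1 coeff_eq_0[of "f*z" i]
      by (cases "i = 0"; cases "i = N"; cases "i < N") auto
  qed
qed


definition Tset :: "nat \<Rightarrow> nat \<Rightarrow> nat \<Rightarrow> nat set" where
  "Tset N k j = {t. 1 \<le> t \<and> t \<le> k \<and> (k - t) mod N = j - 1}"

lemma Tset_finite: "finite (Tset N k j)"
  by (rule finite_subset[of _ "{..k}"]) (auto simp: Tset_def)

lemma Tset_0: "Tset N 0 j = {}"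
  by (auto simp: Tset_def)

lemma mod_Suc_0_iff:
  assumes N1: "N \<ge> 1"
  shows "Suc m mod N = 0 \<longleftrightarrow> m mod N = N - 1"
proof -
  have "m mod N < N" using N1 by simp
  then show ?thesis using N1 unfolding mod_Suc[of m N] by auto
qed

lemma mod_Suc_pos_iff:
  assumes N1: "N \<ge> 1" and r: "1 \<le> r" "r < N"
  shows "Suc m mod N = r \<longleftrightarrow> m mod N = r - 1"
proof -
  have "m mod N < N" using N1 by simp
  then show ?thesis using N1 r unfolding mod_Suc[of m N] by auto
qed

lemma Tset_Suc_1:
  assumes N1: "N \<ge> 1"
  shows "Tset N (Suc k) 1 = insert (Suc k) (Tset N k N)"
proof (rule set_eqI)
  fix t
  show "t \<in> Tset N (Suc k) 1 \<longleftrightarrow> t \<in> insert (Suc k) (Tset N k N)"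
  proof (cases "t \<le> k")
    case True
    then have e: "Suc k - t = Suc (k - t)" by (rule Suc_diff_le)
    have "t \<in> Tset N (Suc k) 1 \<longleftrightarrow> 1 \<le> t \<and> t \<le> Suc k \<and> (k - t) mod N = N - 1"
      unfolding Tset_def mem_Collect_eq e diff_self_eq_0 mod_Suc_0_iff[OF N1] by (rule refl)
    also have "\<dots> \<longleftrightarrow> t \<in> Tset N k N" unfolding Tset_def mem_Collect_eq using True by auto
    finally show ?thesis using True by auto
  next
    case False
    then show ?thesis by (auto simp: Tset_def)
  qed
qed

lemma Tset_Suc_ge2:
  assumes N1: "N \<ge> 1" and j: "2 \<le> j" "j \<le> N"
  shows "Tset N (Suc k) j = Tset N k (j - 1)"
proof (rule set_eqI)
  fix t
  show "t \<in> Tset N (Suc k) j \<longleftrightarrow> t \<in> Tset N k (j - 1)"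
  proof (cases "t \<le> k")
    case True
    then have e: "Suc k - t = Suc (k - t)" by (rule Suc_diff_le)
    have r: "1 \<le> j - 1" "j - 1 < N" using j by auto
    have "t \<in> Tset N (Suc k) j \<longleftrightarrow> 1 \<le> t \<and> t \<le> Suc k \<and> (k - t) mod N = j - 1 - 1"
      unfolding Tset_def mem_Collect_eq e mod_Suc_pos_iff[OF N1 r] by simp
    also have "\<dots> \<longleftrightarrow> t \<in> Tset N k (j - 1)" unfolding Tset_def mem_Collect_eq using True by auto
    finally show ?thesis .
  next
    case False
    show ?thesis
    proof (cases "t = Suc k")
      case True then show ?thesis using j by (simp add: Tset_def)
    next
      case False
      then show ?thesis using \<open>\<not> t \<le> k\<close> by (auto simp: Tset_def)
    qed
  qed
qed

lemma dual_reg_closed: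
  assumes N1: "N \<ge> 1"
  shows "1 \<le> j \<Longrightarrow> j \<le> N \<Longrightarrow> dual_reg N g k j = (\<Sum>t\<in>Tset N k j. g t)"
proof (induction k arbitrary: j)
  case 0 then show ?case by (simp add: Tset_0)
next
  case (Suc k)
  show ?case
  proof (cases "j = 1")
    case True
    have nin: "Suc k \<notin> Tset N k N" by (auto simp: Tset_def)
    have "dual_reg N g (Suc k) j = g (Suc k) + dual_reg N g k N" using True by simp
    also have "\<dots> = g (Suc k) + (\<Sum>t\<in>Tset N k N. g t)" using Suc.IH[of N] N1 by simp
    also have "\<dots> = (\<Sum>t\<in>Tset N (Suc k) j. g t)"
      unfolding True Tset_Suc_1[OF N1] using nin by (simp add: Tset_finite)
    finally show ?thesis .
  next
    case False
    then have j2: "2 \<le> j" using Suc.prems by simp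
    have "dual_reg N g (Suc k) j = dual_reg N g k (j - 1)" using False by simp
    also have "\<dots> = (\<Sum>t\<in>Tset N k (j - 1). g t)" using Suc.IH[of "j - 1"] Suc.prems j2 by simp
    also have "\<dots> = (\<Sum>t\<in>Tset N (Suc k) j. g t)" using Tset_Suc_ge2[OF N1 j2 Suc.prems(2)] by simp
    finally show ?thesis .
  qed
qed

lemma Tset_disj:
  assumes "1 \<le> i" "i \<le> N" "1 \<le> j" "j \<le> N" "i \<noteq> j"
  shows "Tset N k i \<inter> Tset N k j = {}"
  using assms by (auto simp: Tset_def)

context prob_space
begin

lemma ev_eq:
  assumes "random_variable (count_space UNIV) X"
  shows "{\<omega>\<in>space M. X \<omega> = v} \<in> events"
proof -
  have "X -` {v} \<inter> space M \<in> events" using measurable_sets[OF assms, of "{v}"] by simp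
  moreover have "X -` {v} \<inter> space M = {\<omega>\<in>space M. X \<omega> = v}" by auto
  ultimately show ?thesis by simp
qed

lemma indep_joint:
  assumes ind: "indep_vars (\<lambda>_. count_space UNIV) Z I" and J: "J \<subseteq> I" "finite J" "J \<noteq> {}"
  shows "prob {\<omega>\<in>space M. \<forall>l\<in>J. Z l \<omega> = u l} = (\<Prod>l\<in>J. prob {\<omega>\<in>space M. Z l \<omega> = u l})"
proof -
  have "prob (\<Inter>l\<in>J. Z l -` {u l} \<inter> space M) = (\<Prod>l\<in>J. prob (Z l -` {u l} \<inter> space M))"
    by (rule indep_varsD[OF ind J(3) J(2) J(1)]) simp
  moreover have "(\<Inter>l\<in>J. Z l -` {u l} \<inter> space M) = {\<omega>\<in>space M. \<forall>l\<in>J. Z l \<omega> = u l}"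
    using J(3) by auto
  moreover have "\<And>l. Z l -` {u l} \<inter> space M = {\<omega>\<in>space M. Z l \<omega> = u l}" by auto
  ultimately show ?thesis by simp
qed

lemma conv2:
  fixes Z :: "'i \<Rightarrow> 'a \<Rightarrow> 'b::{finite,comm_ring_1}"
  assumes ind: "indep_vars (\<lambda>_. count_space UNIV) Z I" and ij: "i \<in> I" "j \<in> I" "i \<noteq> j"
  shows "prob {\<omega>\<in>space M. Z i \<omega> + Z j \<omega> = x} =
    (\<Sum>c\<in>UNIV. prob {\<omega>\<in>space M. Z i \<omega> = c} * prob {\<omega>\<in>space M. Z j \<omega> = x - c})"
proof -
  have rv: "\<And>l. l \<in> I \<Longrightarrow> random_variable (count_space UNIV) (Z l)"
    using ind by (auto simp: indep_vars_def)
  define E where "E c = {\<omega>\<in>space M. Z i \<omega> = c \<and> Z j \<omega> = x - c}" for c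
  have E_ev: "E c \<in> events" for c
  proof -
    have "E c = {\<omega>\<in>space M. Z i \<omega> = c} \<inter> {\<omega>\<in>space M. Z j \<omega> = x - c}" by (auto simp: E_def)
    then show ?thesis using ev_eq[OF rv[OF ij(1)]] ev_eq[OF rv[OF ij(2)]] by auto
  qed
  have "{\<omega>\<in>space M. Z i \<omega> + Z j \<omega> = x} = (\<Union>c\<in>UNIV. E c)"
    by (auto simp: E_def eq_diff_eq add.commute)
  moreover have "prob (\<Union>c\<in>UNIV. E c) = (\<Sum>c\<in>UNIV. prob (E c))"
    by (rule finite_measure_finite_Union) (auto simp: disjoint_family_on_def E_def E_ev[unfolded E_def])
  ultimately have "prob {\<omega>\<in>space M. Z i \<omega> + Z j \<omega> = x} = (\<Sum>c\<in>UNIV. prob (E c))"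
    by simp
  also have "\<dots> = (\<Sum>c\<in>UNIV. prob {\<omega>\<in>space M. Z i \<omega> = c} * prob {\<omega>\<in>space M. Z j \<omega> = x - c})"
  proof (rule sum.cong[OF refl])
    fix c
    define u where "u l = (if l = i then c else x - c)" for l
    have "E c = {\<omega>\<in>space M. \<forall>l\<in>{i, j}. Z l \<omega> = u l}" using ij(3) by (auto simp: E_def u_def)
    also have "prob \<dots> = (\<Prod>l\<in>{i, j}. prob {\<omega>\<in>space M. Z l \<omega> = u l})"
      by (rule indep_joint[OF ind]) (use ij in auto)
    finally show "prob (E c) = prob {\<omega>\<in>space M. Z i \<omega> = c} * prob {\<omega>\<in>space M. Z j \<omega> = x - c}"
      using ij(3) by (simp add: u_def)
  qed
  finally show ?thesis .
qed

lemma perm_dist: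
  fixes X :: "'a \<Rightarrow> 'b::{finite,comm_ring_1}"
  assumes rv: "random_variable (count_space UNIV) X"
  shows "prob {\<omega>\<in>space M. h * X \<omega> = y} = pmf_perm h (\<lambda>v. prob {\<omega>\<in>space M. X \<omega> = v}) y"
proof -
  have "{\<omega>\<in>space M. h * X \<omega> = y} = (\<Union>u\<in>{u. h * u = y}. {\<omega>\<in>space M. X \<omega> = u})" by auto
  moreover have "prob (\<Union>u\<in>{u. h * u = y}. {\<omega>\<in>space M. X \<omega> = u}) =
     (\<Sum>u\<in>{u. h * u = y}. prob {\<omega>\<in>space M. X \<omega> = u})"
    by (rule finite_measure_finite_Union) (auto simp: disjoint_family_on_def ev_eq[OF rv])
  ultimately show ?thesis unfolding pmf_perm_def by simp
qed

lemma indep_groups: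
  fixes c :: "'i \<Rightarrow> 'a \<Rightarrow> 'b::finite"
  assumes ind: "indep_vars (\<lambda>_. count_space UNIV) c I"
    and K: "\<And>i. i \<in> L \<Longrightarrow> K i \<subseteq> I" and Kf: "\<And>i. i \<in> L \<Longrightarrow> finite (K i)"
    and dj: "disjoint_family_on K L"
  shows "indep_vars (\<lambda>_. count_space UNIV) (\<lambda>i \<omega>. F i (restrict (\<lambda>t. c t \<omega>) (K i))) L"
proof -
  have 1: "indep_vars (\<lambda>i. PiM (K i) (\<lambda>_. count_space UNIV)) (\<lambda>i \<omega>. restrict (\<lambda>t. c t \<omega>) (K i)) L"
    by (rule indep_vars_restrict[OF ind K dj])
  have eqM: "PiM (K i) (\<lambda>_. count_space (UNIV::'b set)) = count_space (PiE (K i) (\<lambda>_. UNIV))"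
    if "i \<in> L" for i
    by (rule count_space_PiM_finite) (auto simp: Kf that)
  have "indep_vars (\<lambda>i. PiM (K i) (\<lambda>_. count_space UNIV)) (\<lambda>i \<omega>. restrict (\<lambda>t. c t \<omega>) (K i)) L
    \<longleftrightarrow> indep_vars (\<lambda>i. count_space (PiE (K i) (\<lambda>_. UNIV))) (\<lambda>i \<omega>. restrict (\<lambda>t. c t \<omega>) (K i)) L"
    by (rule indep_vars_cong) (auto simp: eqM)
  with 1 have 2: "indep_vars (\<lambda>i. count_space (PiE (K i) (\<lambda>_. UNIV))) (\<lambda>i \<omega>. restrict (\<lambda>t. c t \<omega>) (K i)) L"
    by simp
  show ?thesis
    by (rule indep_vars_compose2[OF 2]) simp
qed

end


locale dual_setup = prob_space M for M :: "'m measure" +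
  fixes c :: "nat \<Rightarrow> 'm \<Rightarrow> 'a::{finite,comm_ring_1}" and Pc :: "nat \<Rightarrow> 'a \<Rightarrow> real" and N :: nat
  assumes ind: "indep_vars (\<lambda>_. count_space UNIV) c {1..}"
    and Pc: "\<And>k x. k \<ge> 1 \<Longrightarrow> prob {\<omega>\<in>space M. c k \<omega> = x} = Pc k x"
    and N1: "N \<ge> 1"
begin

definition Kf :: "nat \<Rightarrow> nat \<Rightarrow> nat set" where
  "Kf k i = (if i = 0 then {k} else Tset N (k - 1) i)"

definition Yv :: "nat \<Rightarrow> nat \<Rightarrow> 'm \<Rightarrow> 'a" where
  "Yv k i \<omega> = (if i = 0 then c k \<omega> else dual_reg N (\<lambda>t. c t \<omega>) (k - 1) i)"

lemma Yv_eq: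
  assumes k: "k \<ge> 1" and i: "i \<in> {0..N}"
  shows "Yv k i \<omega> = (\<Sum>t\<in>Kf k i. restrict (\<lambda>t. c t \<omega>) (Kf k i) t)"
proof (cases "i = 0")
  case True then show ?thesis by (simp add: Yv_def Kf_def)
next
  case False
  then have "Yv k i \<omega> = (\<Sum>t\<in>Tset N (k - 1) i. c t \<omega>)"
    using dual_reg_closed[OF N1, of i "\<lambda>t. c t \<omega>" "k - 1"] i by (simp add: Yv_def)
  also have "\<dots> = (\<Sum>t\<in>Kf k i. restrict (\<lambda>t. c t \<omega>) (Kf k i) t)"
    using False by (simp add: Kf_def)
  finally show ?thesis .
qed

lemma part_a:
  assumes k: "k \<ge> 1"
  shows "indep_vars (\<lambda>_. count_space UNIV) (Yv k) {0..N}"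
proof -
  have "indep_vars (\<lambda>_. count_space UNIV)
      (\<lambda>i \<omega>. (\<lambda>g. \<Sum>t\<in>Kf k i. g t) (restrict (\<lambda>t. c t \<omega>) (Kf k i))) {0..N}"
  proof (rule indep_groups[OF ind])
    show "Kf k i \<subseteq> {1..}" if "i \<in> {0..N}" for i
      using k by (auto simp: Kf_def Tset_def)
    show "finite (Kf k i)" for i by (simp add: Kf_def Tset_finite)
    show "disjoint_family_on (Kf k) {0..N}"
      unfolding disjoint_family_on_def
    proof (intro ballI impI)
      fix i j assume ij: "i \<in> {0..N}" "j \<in> {0..N}" "i \<noteq> j"
      show "Kf k i \<inter> Kf k j = {}"
      proof (cases "i = 0 \<or> j = 0")
        case True then show ?thesis using ij k by (auto simp: Kf_def Tset_def)
      next
        case False then show ?thesis using ij Tset_disj[of i N j "k - 1"] by (auto simp: Kf_def)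
      qed
    qed
  qed
  moreover have "indep_vars (\<lambda>_. count_space UNIV)
      (\<lambda>i \<omega>. (\<lambda>g. \<Sum>t\<in>Kf k i. g t) (restrict (\<lambda>t. c t \<omega>) (Kf k i))) {0..N}
    \<longleftrightarrow> indep_vars (\<lambda>_. count_space UNIV) (Yv k) {0..N}"
    by (rule indep_vars_cong) (auto simp: Yv_eq[OF k] fun_eq_iff)
  ultimately show ?thesis by simp
qed

lemma rv_Yv:
  assumes "k \<ge> 1" "i \<in> {0..N}"
  shows "random_variable (count_space UNIV) (Yv k i)"
  using part_a[OF assms(1)] assms(2) by (auto simp: indep_vars_def)

lemma part_b:
  "1 \<le> j \<Longrightarrow> j \<le> N \<Longrightarrow> prob {\<omega>\<in>space M. dual_reg N (\<lambda>t. c t \<omega>) k j = x} = fwd_pmf N Pc k j x"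
proof (induction k arbitrary: j x)
  case 0
  show ?case
  proof (cases "x = 0")
    case True then show ?thesis by (simp add: delta0_def prob_space)
  next
    case False then show ?thesis by (simp add: delta0_def)
  qed
next
  case (Suc k)
  show ?case
  proof (cases "j = 1")
    case True
    have NN: "N \<noteq> 0" using N1 by simp
    have "prob {\<omega>\<in>space M. dual_reg N (\<lambda>t. c t \<omega>) (Suc k) j = x}
        = prob {\<omega>\<in>space M. Yv (Suc k) 0 \<omega> + Yv (Suc k) N \<omega> = x}"
      using True NN by (simp add: Yv_def)
    also have "\<dots> = (\<Sum>d\<in>UNIV. prob {\<omega>\<in>space M. Yv (Suc k) 0 \<omega> = d} * prob {\<omega>\<in>space M. Yv (Suc k) N \<omega> = x - d})"
      by (rule conv2[OF part_a]) (use NN in auto)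
    also have "\<dots> = (\<Sum>d\<in>UNIV. Pc (Suc k) d * fwd_pmf N Pc k N (x - d))"
      using NN Suc.IH[of N] N1 Pc[of "Suc k"] by (simp add: Yv_def)
    also have "\<dots> = fwd_pmf N Pc (Suc k) j x"
      using True by (simp add: pmf_conv_def)
    finally show ?thesis .
  next
    case False
    then show ?thesis using Suc.IH[of "j - 1"] Suc.prems by simp
  qed
qed


lemma part_c1:
  assumes k: "k \<ge> 1"
  shows "m < N \<Longrightarrow> foldl pmf_conv (Pc k) (map (\<lambda>j. pmf_perm (h j) (fwd_pmf N Pc (k - 1) j)) [1..<Suc m]) x
     = prob {\<omega>\<in>space M. c k \<omega> + (\<Sum>j=1..m. h j * dual_reg N (\<lambda>t. c t \<omega>) (k - 1) j) = x}"
proof (induction m arbitrary: x)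
  case 0
  then show ?case using Pc[OF k] by simp
next
  case (Suc m)
  define W where "W \<omega> = c k \<omega> + (\<Sum>j=1..m. h j * dual_reg N (\<lambda>t. c t \<omega>) (k - 1) j)" for \<omega>
  define V where "V \<omega> = dual_reg N (\<lambda>t. c t \<omega>) (k - 1) (Suc m)" for \<omega>
  define Z where "Z i \<omega> = (if i = (0::nat) then W \<omega> else h (Suc m) * V \<omega>)" for i \<omega>
  define K' where "K' i = (if i = (0::nat) then insert k (\<Union>j\<in>{1..m}. Tset N (k - 1) j)
                         else Tset N (k - 1) (Suc m))" for i
  define F where "F i g = (if i = (0::nat) then g k + (\<Sum>j=1..m. h j * (\<Sum>t\<in>Tset N (k - 1) j. g t))
                         else h (Suc m) * (\<Sum>t\<in>Tset N (k - 1) (Suc m). g t))" for i and g :: "nat \<Rightarrow> 'a"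
  have mN: "m < N" "Suc m \<le> N" using Suc.prems by auto
  have indF: "indep_vars (\<lambda>_. count_space UNIV) (\<lambda>i \<omega>. F i (restrict (\<lambda>t. c t \<omega>) (K' i))) {0,1}"
  proof (rule indep_groups[OF ind])
    show "K' i \<subseteq> {1..}" if "i \<in> {0,1}" for i
      using k by (auto simp: K'_def Tset_def)
    show "finite (K' i)" for i by (simp add: K'_def Tset_finite)
    show "disjoint_family_on K' {0,1}"
    proof -
      have D: "K' 0 \<inter> K' 1 = {}"
      proof -
        have "k \<notin> Tset N (k - 1) (Suc m)" using k by (auto simp: Tset_def)
        moreover have "Tset N (k - 1) j \<inter> Tset N (k - 1) (Suc m) = {}" if "j \<in> {1..m}" for j
          using that mN by (intro Tset_disj) auto
        ultimately show ?thesis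
        proof (intro equals0I)
          fix t assume A: "k \<notin> Tset N (k - 1) (Suc m)"
            and B: "\<And>j. j \<in> {1..m} \<Longrightarrow> Tset N (k - 1) j \<inter> Tset N (k - 1) (Suc m) = {}"
            and t: "t \<in> K' 0 \<inter> K' 1"
          from t have t1: "t \<in> Tset N (k - 1) (Suc m)" by (simp add: K'_def)
          from t have "t = k \<or> (\<exists>j\<in>{1..m}. t \<in> Tset N (k - 1) j)" by (simp add: K'_def)
          then show False
          proof
            assume "t = k" then show False using A t1 by simp
          next
            assume "\<exists>j\<in>{1..m}. t \<in> Tset N (k - 1) j"
            then obtain j where "j \<in> {1..m}" "t \<in> Tset N (k - 1) j" by blast
            then show False using B[of j] t1 by blast
          qed
        qed
      qed
      show ?thesis unfolding disjoint_family_on_def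
      proof (intro ballI impI)
        fix i j :: nat assume ij: "i \<in> {0,1}" "j \<in> {0,1}" "i \<noteq> j"
        then have "(i = 0 \<and> j = 1) \<or> (i = 1 \<and> j = 0)" by auto
        then show "K' i \<inter> K' j = {}"
        proof
          assume "i = 0 \<and> j = 1" then show ?thesis using D by simp
        next
          assume "i = 1 \<and> j = 0" then show ?thesis using D by (simp add: Int_commute)
        qed
      qed
    qed
  qed
  have Feq: "F i (restrict (\<lambda>t. c t \<omega>) (K' i)) = Z i \<omega>" if "i \<in> {0,1}" for i \<omega>
  proof (cases "i = 0")
    case True
    have "(\<Sum>j=1..m. h j * (\<Sum>t\<in>Tset N (k - 1) j. restrict (\<lambda>t. c t \<omega>) (K' 0) t))
        = (\<Sum>j=1..m. h j * dual_reg N (\<lambda>t. c t \<omega>) (k - 1) j)"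
    proof (rule sum.cong[OF refl])
      fix j assume j: "j \<in> {1..m}"
      have "(\<Sum>t\<in>Tset N (k - 1) j. restrict (\<lambda>t. c t \<omega>) (K' 0) t) = (\<Sum>t\<in>Tset N (k - 1) j. c t \<omega>)"
        using j by (intro sum.cong refl) (auto simp: K'_def)
      also have "\<dots> = dual_reg N (\<lambda>t. c t \<omega>) (k - 1) j"
        using j mN by (intro dual_reg_closed[symmetric] N1) auto
      finally show "h j * (\<Sum>t\<in>Tset N (k - 1) j. restrict (\<lambda>t. c t \<omega>) (K' 0) t) = h j * dual_reg N (\<lambda>t. c t \<omega>) (k - 1) j"
        by simp
    qed
    then show ?thesis using True by (simp add: F_def Z_def W_def K'_def)
  next
    case False
    then have i1: "i = 1" using that by auto
    have "(\<Sum>t\<in>Tset N (k - 1) (Suc m). restrict (\<lambda>t. c t \<omega>) (K' 1) t) = (\<Sum>t\<in>Tset N (k - 1) (Suc m). c t \<omega>)"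
      by (intro sum.cong refl) (auto simp: K'_def)
    also have "\<dots> = V \<omega>"
      unfolding V_def using mN by (intro dual_reg_closed[symmetric] N1) auto
    finally show ?thesis using i1 by (simp add: F_def Z_def)
  qed
  have indZ: "indep_vars (\<lambda>_. count_space UNIV) Z {0,1}"
  proof -
    have "indep_vars (\<lambda>_. count_space UNIV) (\<lambda>i \<omega>. F i (restrict (\<lambda>t. c t \<omega>) (K' i))) {0,1}
       \<longleftrightarrow> indep_vars (\<lambda>_. count_space UNIV) Z {0,1}"
      by (rule indep_vars_cong) (auto simp: Feq fun_eq_iff)
    with indF show ?thesis by simp
  qed
  have rvV: "random_variable (count_space UNIV) V"
  proof -
    have "random_variable (count_space UNIV) (Yv k (Suc m))" using rv_Yv[OF k] mN by auto
    moreover have "Yv k (Suc m) = V" by (simp add: Yv_def V_def fun_eq_iff)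
    ultimately show ?thesis by simp
  qed
  have distV: "(\<lambda>v. prob {\<omega>\<in>space M. V \<omega> = v}) = fwd_pmf N Pc (k - 1) (Suc m)"
    unfolding V_def using part_b mN by auto
  have "foldl pmf_conv (Pc k) (map (\<lambda>j. pmf_perm (h j) (fwd_pmf N Pc (k - 1) j)) [1..<Suc (Suc m)]) x
      = pmf_conv (foldl pmf_conv (Pc k) (map (\<lambda>j. pmf_perm (h j) (fwd_pmf N Pc (k - 1) j)) [1..<Suc m]))
           (pmf_perm (h (Suc m)) (fwd_pmf N Pc (k - 1) (Suc m))) x"
    by simp
  also have "\<dots> = (\<Sum>d\<in>UNIV. prob {\<omega>\<in>space M. W \<omega> = d} * prob {\<omega>\<in>space M. h (Suc m) * V \<omega> = x - d})"
    unfolding pmf_conv_def Suc.IH[OF mN(1)] W_def[symmetric] perm_dist[OF rvV] distV ..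
  also have "\<dots> = prob {\<omega>\<in>space M. Z 0 \<omega> + Z 1 \<omega> = x}"
    using conv2[OF indZ, of 0 1 x] by (simp add: Z_def)
  also have "\<dots> = prob {\<omega>\<in>space M. c k \<omega> + (\<Sum>j=1..Suc m. h j * dual_reg N (\<lambda>t. c t \<omega>) (k - 1) j) = x}"
    by (simp add: Z_def W_def V_def add.assoc)
  finally show ?case .
qed

lemma part_c_fwd:
  assumes k: "k \<ge> 1"
  shows "fwd_out h N Pc k x = prob {\<omega>\<in>space M. dual_out h N (\<lambda>t. c t \<omega>) k = x}"
proof -
  have NN: "Suc (N - 1) = N" using N1 by simp
  show ?thesis
    using part_c1[OF k, of "N - 1" h x] N1 unfolding fwd_out_def dual_out_def NN by simp
qed


lemma part_c_sum:
  assumes k: "k \<ge> 1"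
  shows "(\<Sum>(u, d) \<in> {(u, d). u \<in> PiE {1..N} (\<lambda>_. UNIV) \<and> d + (\<Sum>j = 1..N - 1. h j * u j) = x}.
            (\<Prod>j = 1..N. fwd_pmf N Pc (k - 1) j (u j)) * Pc k d)
         = prob {\<omega>\<in>space M. dual_out h N (\<lambda>t. c t \<omega>) k = x}"
proof -
  define S where "S = {(u, d). u \<in> PiE {1..N} (\<lambda>_. UNIV::'a set) \<and> d + (\<Sum>j = 1..N - 1. h j * u j) = x}"
  define E where "E ud = {\<omega>\<in>space M. \<forall>l\<in>{0..N}. Yv k l \<omega> = ((fst ud)(0 := snd ud)) l}" for ud :: "(nat \<Rightarrow> 'a) \<times> 'a"
  have S_fin: "finite S"
  proof (rule finite_subset)
    show "S \<subseteq> PiE {1..N} (\<lambda>_. UNIV::'a set) \<times> UNIV" by (auto simp: S_def)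
    show "finite (PiE {1..N} (\<lambda>_. UNIV::'a set) \<times> (UNIV::'a set))" by (simp add: finite_PiE)
  qed
  have ind0: "indep_vars (\<lambda>_. count_space UNIV) (Yv k) {0..N}" by (rule part_a[OF k])
  have E_ev: "E ud \<in> events" for ud
  proof -
    have "E ud = (\<Inter>l\<in>{0..N}. {\<omega>\<in>space M. Yv k l \<omega> = ((fst ud)(0 := snd ud)) l})"
      by (auto simp: E_def)
    also have "\<dots> \<in> events"
      by (rule sets.finite_INT) (auto intro!: ev_eq rv_Yv[OF k])
    finally show ?thesis .
  qed
  have tm: "(\<Prod>j = 1..N. fwd_pmf N Pc (k - 1) j (u j)) * Pc k d = prob (E (u, d))" for u d
  proof -
    have spl: "{0..N} = insert 0 {1..N}" by auto
    have "prob (E (u, d)) = (\<Prod>l\<in>{0..N}. prob {\<omega>\<in>space M. Yv k l \<omega> = (u(0 := d)) l})"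
      unfolding E_def fst_conv snd_conv by (rule indep_joint[OF ind0]) auto
    also have "\<dots> = prob {\<omega>\<in>space M. Yv k 0 \<omega> = d} * (\<Prod>l\<in>{1..N}. prob {\<omega>\<in>space M. Yv k l \<omega> = u l})"
      unfolding spl by (subst prod.insert) (auto intro!: prod.cong)
    also have "\<dots> = Pc k d * (\<Prod>l\<in>{1..N}. fwd_pmf N Pc (k - 1) l (u l))"
      using Pc[OF k] part_b by (auto simp: Yv_def intro!: prod.cong)
    finally show ?thesis by (simp add: mult.commute)
  qed
  have "(\<Sum>(u, d) \<in> S. (\<Prod>j = 1..N. fwd_pmf N Pc (k - 1) j (u j)) * Pc k d) = (\<Sum>ud\<in>S. prob (E ud))"
    by (rule sum.cong[OF refl]) (simp only: case_prod_beta tm prod.collapse)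
  also have "\<dots> = prob (\<Union>ud\<in>S. E ud)"
  proof (rule finite_measure_finite_Union[symmetric])
    show "finite S" by (rule S_fin)
    show "E ` S \<subseteq> events" using E_ev by auto
    show "disjoint_family_on E S"
      unfolding disjoint_family_on_def
    proof (intro ballI impI equals0I)
      fix ud ud' \<omega> assume ud: "ud \<in> S" "ud' \<in> S" "ud \<noteq> ud'" and w: "\<omega> \<in> E ud \<inter> E ud'"
      obtain u d where [simp]: "ud = (u, d)" by (cases ud)
      obtain u' d' where [simp]: "ud' = (u', d')" by (cases ud')
      have u: "u \<in> PiE {1..N} (\<lambda>_. UNIV)" "u' \<in> PiE {1..N} (\<lambda>_. UNIV)" using ud by (auto simp: S_def)
      from w have "\<omega> \<in> E (u, d)" by simp
      then have w1: "\<forall>l\<in>{0..N}. Yv k l \<omega> = (u(0 := d)) l" unfolding E_def fst_conv snd_conv by blast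
      from w have "\<omega> \<in> E (u', d')" by simp
      then have w2: "\<forall>l\<in>{0..N}. Yv k l \<omega> = (u'(0 := d')) l" unfolding E_def fst_conv snd_conv by blast
      have e0: "d = d'" using bspec[OF w1, of 0] bspec[OF w2, of 0] by simp
      have "u l = u' l" if "l \<in> {1..N}" for l
        using bspec[OF w1, of l] bspec[OF w2, of l] that by simp
      then have "u = u'" using u by (intro PiE_ext) auto
      then show False using ud e0 by simp
    qed
  qed
  also have "(\<Union>ud\<in>S. E ud) = {\<omega>\<in>space M. dual_out h N (\<lambda>t. c t \<omega>) k = x}"
  proof (intro set_eqI iffI)
    fix \<omega> assume "\<omega> \<in> (\<Union>ud\<in>S. E ud)"
    then obtain u d where ud: "(u, d) \<in> S" and w: "\<omega> \<in> E (u, d)" by auto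
    have sp: "\<omega> \<in> space M" using w by (simp add: E_def)
    have w1: "\<forall>l\<in>{0..N}. Yv k l \<omega> = (u(0 := d)) l" using w unfolding E_def fst_conv snd_conv by blast
    have d: "c k \<omega> = d" using bspec[OF w1, of 0] by (simp add: Yv_def)
    have uj: "dual_reg N (\<lambda>t. c t \<omega>) (k - 1) j = u j" if "j \<in> {1..N - 1}" for j
    proof -
      have "j \<in> {0..N}" "j \<noteq> 0" using that by auto
      then show ?thesis using bspec[OF w1, of j] by (simp add: Yv_def)
    qed
    have "dual_out h N (\<lambda>t. c t \<omega>) k = d + (\<Sum>j = 1..N - 1. h j * u j)"
      unfolding dual_out_def d using uj by (auto intro!: sum.cong)
    also have "\<dots> = x" using ud by (simp add: S_def)
    finally show "\<omega> \<in> {\<omega>\<in>space M. dual_out h N (\<lambda>t. c t \<omega>) k = x}" using sp by simp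
  next
    fix \<omega> assume w: "\<omega> \<in> {\<omega>\<in>space M. dual_out h N (\<lambda>t. c t \<omega>) k = x}"
    define u where "u = restrict (\<lambda>j. Yv k j \<omega>) {1..N}"
    define d where "d = c k \<omega>"
    have "d + (\<Sum>j = 1..N - 1. h j * u j) = dual_out h N (\<lambda>t. c t \<omega>) k"
      unfolding dual_out_def d_def u_def by (auto simp: Yv_def intro!: sum.cong)
    then have "(u, d) \<in> S" using w by (simp add: S_def u_def)
    moreover have "\<omega> \<in> E (u, d)" using w by (auto simp: E_def u_def d_def Yv_def)
    ultimately show "\<omega> \<in> (\<Union>ud\<in>S. E ud)" by blast
  qed
  finally show ?thesis unfolding S_def .
qed

end

theorem theorem1:
  fixes a f z :: "'a::{field,finite} poly" and n :: nat
  assumes char2: "CHAR('a) = 2"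
    and n_pos: "n \<ge> 1"
    and a_deg: "degree a = n" and a_lead: "lead_coeff a = 1" and a_0: "coeff a 0 = 1"
    and f_deg: "degree f = n" and f_lead: "lead_coeff f = 1" and f_0: "coeff f 0 = 1"
    and z_min: "is_min_comp_poly a z"
  defines "N \<equiv> n + degree z"
    and "h \<equiv> coeff (f * z)"
  shows
    "(\<forall>b c :: nat \<Rightarrow> 'a.
        fps_of_poly f * Abs_fps (\<lambda>i. c (Suc i)) = fps_of_poly a * Abs_fps (\<lambda>i. b (Suc i))
        \<longrightarrow> (\<forall>k\<ge>1. dual_out h N c k = b k))
     \<and>
     (\<forall>(M :: 'm measure) (c :: nat \<Rightarrow> 'm \<Rightarrow> 'a) (Pc :: nat \<Rightarrow> 'a \<Rightarrow> real).
        prob_space M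
        \<and> prob_space.indep_vars M (\<lambda>_. count_space UNIV) c {1..}
        \<and> (\<forall>k\<ge>1. \<forall>x. measure M {\<omega> \<in> space M. c k \<omega> = x} = Pc k x)
        \<longrightarrow> (\<forall>k\<ge>1.
              prob_space.indep_vars M (\<lambda>_. count_space UNIV)
                 (\<lambda>i \<omega>. if i = 0 then c k \<omega> else dual_reg N (\<lambda>t. c t \<omega>) (k - 1) i) {0..N}
            \<and> (\<forall>j\<in>{1..N}. \<forall>x.
                 measure M {\<omega> \<in> space M. dual_reg N (\<lambda>t. c t \<omega>) k j = x} = fwd_pmf N Pc k j x)
            \<and> (\<forall>x.
                 fwd_out h N Pc k x =
                   (\<Sum>(u, d) \<in> {(u, d). u \<in> PiE {1..N} (\<lambda>_. UNIV) \<and>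
                                        d + (\<Sum>j = 1..N - 1. h j * u j) = x}.
                      (\<Prod>j = 1..N. fwd_pmf N Pc (k - 1) j (u j)) * Pc k d)
               \<and> (\<Sum>(u, d) \<in> {(u, d). u \<in> PiE {1..N} (\<lambda>_. UNIV) \<and>
                                        d + (\<Sum>j = 1..N - 1. h j * u j) = x}.
                      (\<Prod>j = 1..N. fwd_pmf N Pc (k - 1) j (u j)) * Pc k d)
                  = measure M {\<omega> \<in> space M. dual_out h N (\<lambda>t. c t \<omega>) k = x})))"
proof -
  have two: "(2::'a) = 0" using of_nat_CHAR[where 'a='a] char2 by simp
  have AZ: "fps_of_poly a * fps_of_poly z = 1 + fps_X ^ N"
    and FZ: "fps_of_poly f * fps_of_poly z = 1 + fps_X ^ N + (\<Sum>j=1..N-1. fps_const (h j) * fps_X ^ j)"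
    and nz: "fps_of_poly a * fps_of_poly z \<noteq> 0" and N1: "N \<ge> 1"
    using poly_facts[OF n_pos a_deg a_lead a_0 f_deg f_lead f_0 z_min] unfolding N_def h_def by auto
  show ?thesis
  proof (intro conjI allI impI)
    fix b c :: "nat \<Rightarrow> 'a" and k :: nat
    assume eq: "fps_of_poly f * Abs_fps (\<lambda>i. c (Suc i)) = fps_of_poly a * Abs_fps (\<lambda>i. b (Suc i))"
      and k: "k \<ge> 1"
    show "dual_out h N c k = b k"
      by (rule dual_part_i[OF two N1 AZ FZ nz eq k])
  next
    fix M :: "'m measure" and c :: "nat \<Rightarrow> 'm \<Rightarrow> 'a" and Pc :: "nat \<Rightarrow> 'a \<Rightarrow> real" and k :: nat
    assume H: "prob_space M
        \<and> prob_space.indep_vars M (\<lambda>_. count_space UNIV) c {1..}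
        \<and> (\<forall>k\<ge>1. \<forall>x. measure M {\<omega> \<in> space M. c k \<omega> = x} = Pc k x)"
      and k: "k \<ge> 1"
    interpret D: dual_setup M c Pc N
      using H N1 by (intro dual_setup.intro dual_setup_axioms.intro) auto
    have Yv: "D.Yv k = (\<lambda>i \<omega>. if i = 0 then c k \<omega> else dual_reg N (\<lambda>t. c t \<omega>) (k - 1) i)"
      by (simp add: D.Yv_def fun_eq_iff)
    show "prob_space.indep_vars M (\<lambda>_. count_space UNIV)
                 (\<lambda>i \<omega>. if i = 0 then c k \<omega> else dual_reg N (\<lambda>t. c t \<omega>) (k - 1) i) {0..N}"
      using D.part_a[OF k] unfolding Yv .
    show "\<forall>j\<in>{1..N}. \<forall>x.
                 measure M {\<omega> \<in> space M. dual_reg N (\<lambda>t. c t \<omega>) k j = x} = fwd_pmf N Pc k j x"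
      using D.part_b by auto
    fix x
    show "fwd_out h N Pc k x =
                   (\<Sum>(u, d) \<in> {(u, d). u \<in> PiE {1..N} (\<lambda>_. UNIV) \<and>
                                        d + (\<Sum>j = 1..N - 1. h j * u j) = x}.
                      (\<Prod>j = 1..N. fwd_pmf N Pc (k - 1) j (u j)) * Pc k d)"
      using D.part_c_fwd[OF k, of h x] D.part_c_sum[OF k, of h x] by simp
    show "(\<Sum>(u, d) \<in> {(u, d). u \<in> PiE {1..N} (\<lambda>_. UNIV) \<and>
                                        d + (\<Sum>j = 1..N - 1. h j * u j) = x}.
                      (\<Prod>j = 1..N. fwd_pmf N Pc (k - 1) j (u j)) * Pc k d)
                  = measure M {\<omega> \<in> space M. dual_out h N (\<lambda>t. c t \<omega>) k = x}"
      by (rule D.part_c_sum[OF k])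
  qed
qed

end
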